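(* Let $(X,d)$ be a metric space. There exists $\alpha\in(0,1)$ such that $(X,d^\alpha)$ admits an isometric embedding into some finite-dimensional normed linear space if and only if $X$ is finite.
   Context: For a metric space $(X,d)$ and $\alpha\in(0,1)$, $d^\alpha$ denotes the metric $(x,y)\mapsto d(x,y)^\alpha$. *)

theory Defs
  imports "HOL-Analysis.Analysis"
begin

text \<open>A finite-dimensional real normed linear space is, up to linear isometry,
  R^n equipped with some norm.  We model R^n as the coordinate space of
  real sequences vanishing from index n on.\<close>

definition coord_space :: "nat \<Rightarrow> (nat \<Rightarrow> real) set" where
  "coord_space n = {v. \<forall>i\<ge>n. v i = 0}"

definition is_norm_on_Rn :: "nat \<Rightarrow> ((nat \<Rightarrow> real) \<Rightarrow> real) \<Rightarrow> bool" where
  "is_norm_on_Rn n N \<longleftrightarrow>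
     (\<forall>v\<in>coord_space n. 0 \<le> N v \<and> (N v = 0 \<longleftrightarrow> v = (\<lambda>i. 0))) \<and>
     (\<forall>c::real. \<forall>v\<in>coord_space n. N (\<lambda>i. c * v i) = \<bar>c\<bar> * N v) \<and>
     (\<forall>u\<in>coord_space n. \<forall>v\<in>coord_space n. N (\<lambda>i. u i + v i) \<le> N u + N v)"

definition embeds_isometrically_fin_dim_normed ::
    "'a set \<Rightarrow> ('a \<Rightarrow> 'a \<Rightarrow> real) \<Rightarrow> bool" where
  "embeds_isometrically_fin_dim_normed M e \<longleftrightarrow>
     (\<exists>n N f. is_norm_on_Rn n N \<and> f ` M \<subseteq> coord_space n \<and>
        (\<forall>x\<in>M. \<forall>y\<in>M. N (\<lambda>i. f x i - f y i) = e x y))"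

end

theory Submission
  imports Defs
begin

definition vsub :: "(nat\<Rightarrow>real) \<Rightarrow> (nat\<Rightarrow>real) \<Rightarrow> (nat\<Rightarrow>real)" where "vsub u v = (\<lambda>i. u i - v i)"
definition vadd :: "(nat\<Rightarrow>real) \<Rightarrow> (nat\<Rightarrow>real) \<Rightarrow> (nat\<Rightarrow>real)" where "vadd u v = (\<lambda>i. u i + v i)"
definition vsc :: "real \<Rightarrow> (nat\<Rightarrow>real) \<Rightarrow> (nat\<Rightarrow>real)" where "vsc c v = (\<lambda>i. c * v i)"

lemma cs_sub[intro]: "u \<in> coord_space n \<Longrightarrow> v \<in> coord_space n \<Longrightarrow> vsub u v \<in> coord_space n"
  by (simp add: coord_space_def vsub_def)
lemma cs_add[intro]: "u \<in> coord_space n \<Longrightarrow> v \<in> coord_space n \<Longrightarrow> vadd u v \<in> coord_space n"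
  by (simp add: coord_space_def vadd_def)
lemma cs_sc[intro]: "v \<in> coord_space n \<Longrightarrow> vsc c v \<in> coord_space n"
  by (simp add: coord_space_def vsc_def)
lemma cs_zero[intro]: "(\<lambda>i. 0) \<in> coord_space n"
  by (simp add: coord_space_def)

locale nrm = fixes n :: nat and N :: "(nat\<Rightarrow>real)\<Rightarrow>real"
  assumes isn: "is_norm_on_Rn n N"
begin
abbreviation "V \<equiv> coord_space n"
lemma N_nonneg: "v \<in> V \<Longrightarrow> 0 \<le> N v" using isn by (auto simp: is_norm_on_Rn_def)
lemma N_eq0: "v \<in> V \<Longrightarrow> N v = 0 \<longleftrightarrow> v = (\<lambda>i. 0)" using isn by (auto simp: is_norm_on_Rn_def)
lemma N_sc: "v \<in> V \<Longrightarrow> N (vsc c v) = \<bar>c\<bar> * N v" using isn by (auto simp: is_norm_on_Rn_def vsc_def)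
lemma N_add: "u \<in> V \<Longrightarrow> v \<in> V \<Longrightarrow> N (vadd u v) \<le> N u + N v" using isn by (auto simp: is_norm_on_Rn_def vadd_def)
lemma N_0: "N (\<lambda>i. 0) = 0" using N_eq0[OF cs_zero] by simp
lemma N_subtri: "u \<in> V \<Longrightarrow> v \<in> V \<Longrightarrow> w \<in> V \<Longrightarrow> N (vsub u w) \<le> N (vsub u v) + N (vsub v w)"
proof -
  assume a: "u \<in> V" "v \<in> V" "w \<in> V"
  have "vsub u w = vadd (vsub u v) (vsub v w)" by (auto simp: vsub_def vadd_def)
  thus ?thesis using N_add a by auto
qed
lemma N_comm: "u \<in> V \<Longrightarrow> v \<in> V \<Longrightarrow> N (vsub u v) = N (vsub v u)"
proof -
  assume a: "u \<in> V" "v \<in> V"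
  have "vsub v u = vsc (-1) (vsub u v)" by (auto simp: vsub_def vsc_def)
  hence "N (vsub v u) = \<bar>-1\<bar> * N (vsub u v)" using N_sc[OF cs_sub[OF a], of "-1"] by simp
  thus ?thesis by simp
qed
lemma N_rev: "u \<in> V \<Longrightarrow> v \<in> V \<Longrightarrow> N u - N v \<le> N (vsub u v)"
proof -
  assume a: "u \<in> V" "v \<in> V"
  have "u = vadd (vsub u v) v" by (auto simp: vsub_def vadd_def)
  hence "N u \<le> N (vsub u v) + N v" using N_add a by (metis cs_sub)
  thus ?thesis by simp
qed
lemma N_rev_abs: "u \<in> V \<Longrightarrow> v \<in> V \<Longrightarrow> \<bar>N u - N v\<bar> \<le> N (vsub u v)"
  using N_rev[of u v] N_rev[of v u] N_comm[of u v] by auto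

definition ev :: "nat \<Rightarrow> nat \<Rightarrow> real" where "ev j = (\<lambda>i. if i = j then 1 else 0)"
definition trunc :: "nat \<Rightarrow> (nat\<Rightarrow>real) \<Rightarrow> (nat\<Rightarrow>real)" where "trunc m v = (\<lambda>i. if i < m then v i else 0)"

lemma trunc_bound: "m \<le> n \<Longrightarrow> N (trunc m v) \<le> (\<Sum>j<m. \<bar>v j\<bar> * N (ev j))"
proof (induction m)
  case 0 then show ?case by (simp add: trunc_def N_0)
next
  case (Suc m)
  have e: "ev m \<in> V" using Suc by (auto simp: coord_space_def ev_def)
  have t: "trunc m v \<in> V" using Suc by (auto simp: coord_space_def trunc_def)
  have "trunc (Suc m) v = vadd (trunc m v) (vsc (v m) (ev m))"
    by (rule ext) (auto simp: trunc_def vadd_def vsc_def ev_def less_Suc_eq)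
  hence "N (trunc (Suc m) v) \<le> N (trunc m v) + \<bar>v m\<bar> * N (ev m)"
    using N_add[OF t cs_sc[OF e]] N_sc[OF e] by simp
  then show ?case using Suc by simp
qed

lemma upper: "\<exists>C\<ge>0. \<forall>v\<in>V. N v \<le> C * (\<Sum>i<n. \<bar>v i\<bar>)"
proof (intro exI[of _ "\<Sum>j<n. N (ev j)"] conjI ballI)
  have e: "\<And>j. j < n \<Longrightarrow> ev j \<in> V" by (auto simp: coord_space_def ev_def)
  show "0 \<le> (\<Sum>j<n. N (ev j))" by (rule sum_nonneg) (use e N_nonneg in auto)
  fix v assume v: "v \<in> V"
  have "trunc n v = v" using v by (auto simp: trunc_def coord_space_def)
  hence "N v \<le> (\<Sum>j<n. \<bar>v j\<bar> * N (ev j))" using trunc_bound[of n v] by simp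
  also have "\<dots> \<le> (\<Sum>j<n. \<bar>v j\<bar> * (\<Sum>j<n. N (ev j)))"
  proof (rule sum_mono)
    fix j assume "j \<in> {..<n}"
    hence "N (ev j) \<le> (\<Sum>j<n. N (ev j))"
      using member_le_sum[of j "{..<n}" "\<lambda>j. N (ev j)"] e N_nonneg by auto
    thus "\<bar>v j\<bar> * N (ev j) \<le> \<bar>v j\<bar> * (\<Sum>j<n. N (ev j))" by (simp add: mult_left_mono)
  qed
  finally show "N v \<le> (\<Sum>j<n. N (ev j)) * (\<Sum>i<n. \<bar>v i\<bar>)" by (simp add: sum_distrib_right mult.commute)
qed
end

lemma CB:
  fixes s :: "nat \<Rightarrow> nat \<Rightarrow> real"
  assumes "\<And>k i. \<bar>s k i\<bar> \<le> M"
  shows "\<exists>r. strict_mono r \<and> (\<forall>i<m. convergent (\<lambda>k. s (r k) i))"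
proof (induction m)
  case 0 show ?case by (rule exI[of _ id]) (simp add: strict_mono_def)
next
  case (Suc m)
  then obtain r where r: "strict_mono r" "\<forall>i<m. convergent (\<lambda>k. s (r k) i)" by blast
  obtain f where f: "strict_mono f" "monoseq (\<lambda>k. s (r (f k)) m)"
    using seq_monosub[of "\<lambda>k. s (r k) m"] by blast
  have "Bseq (\<lambda>k. s (r (f k)) m)" by (rule BseqI'[where K=M]) (use assms in simp)
  hence c: "convergent (\<lambda>k. s (r (f k)) m)" using f Bseq_monoseq_convergent by blast
  have "\<forall>i<Suc m. convergent (\<lambda>k. s ((r \<circ> f) k) i)"
  proof (intro allI impI)
    fix i assume "i < Suc m"
    then consider "i < m" | "i = m" by linarith
    thus "convergent (\<lambda>k. s ((r \<circ> f) k) i)"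
    proof cases
      case 1
      hence "convergent ((\<lambda>k. s (r k) i) \<circ> f)" using r f convergent_subseq_convergent by blast
      thus ?thesis by (simp add: comp_def)
    qed (use c in simp)
  qed
  thus ?case using r f strict_mono_o by blast
qed

definition l1 :: "nat \<Rightarrow> (nat \<Rightarrow> real) \<Rightarrow> real" where "l1 n v = (\<Sum>i<n. \<bar>v i\<bar>)"

lemma limvec:
  assumes "\<forall>i<n. convergent (\<lambda>k. g k i)"
  shows "\<exists>u \<in> coord_space n. (\<forall>i<n. (\<lambda>k. g k i) \<longlonglongrightarrow> u i) \<and> (\<lambda>k. l1 n (vsub (g k) u)) \<longlonglongrightarrow> 0"
proof -
  define u where "u i = (if i < n then lim (\<lambda>k. g k i) else 0)" for i
  have u: "u \<in> coord_space n" by (simp add: u_def coord_space_def)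
  have t: "\<forall>i<n. (\<lambda>k. g k i) \<longlonglongrightarrow> u i" using assms by (simp add: u_def convergent_LIMSEQ_iff)
  have "(\<lambda>k. \<Sum>i<n. \<bar>g k i - u i\<bar>) \<longlonglongrightarrow> (\<Sum>i<n. \<bar>u i - u i\<bar>)"
    by (intro tendsto_intros) (use t in auto)
  hence "(\<lambda>k. l1 n (vsub (g k) u)) \<longlonglongrightarrow> 0" by (simp add: l1_def vsub_def)
  thus ?thesis using u t by blast
qed

context nrm begin

lemma lower: "\<exists>c>0. \<forall>v\<in>V. c * l1 n v \<le> N v"
proof (rule ccontr)
  assume nc: "\<not> ?thesis"
  have h: "\<forall>k::nat. \<exists>v\<in>V. N v < (1/(real k+1)) * l1 n v"
  proof
    fix k :: nat
    have pos: "1/(real k+1) > 0" by simp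
    from nc have "\<not> (\<forall>v\<in>V. (1/(real k+1)) * l1 n v \<le> N v)" using pos by blast
    thus "\<exists>v\<in>V. N v < (1/(real k+1)) * l1 n v" by (auto simp: not_le)
  qed
  have "\<forall>k::nat. \<exists>v\<in>V. l1 n v = 1 \<and> N v < 1/(real k+1)"
  proof
    fix k :: nat
    obtain v where v: "v \<in> V" "N v < (1/(real k+1)) * l1 n v" using h by blast
    have "0 < (1/(real k+1)) * l1 n v" using v N_nonneg[OF v(1)] by linarith
    hence lp: "l1 n v > 0" by (simp add: zero_less_mult_iff zero_less_divide_iff)
    define w where "w = vsc (1 / l1 n v) v"
    have "l1 n w = (\<Sum>i<n. \<bar>v i\<bar> / l1 n v)" using lp by (simp add: w_def vsc_def l1_def abs_mult)
    also have "\<dots> = 1" using lp by (simp add: sum_divide_distrib[symmetric] l1_def)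
    finally have "l1 n w = 1" .
    moreover have "N w = N v / l1 n v" using N_sc[OF v(1)] lp by (simp add: w_def)
    moreover have "N v / l1 n v < 1/(real k+1)" using v(2) lp by (simp add: divide_simps)
    moreover have "w \<in> V" using v by (auto simp: w_def)
    ultimately show "\<exists>v\<in>V. l1 n v = 1 \<and> N v < 1/(real k+1)" by auto
  qed
  then obtain g where g: "\<And>k. g k \<in> V" "\<And>k. l1 n (g k) = 1" "\<And>k. N (g k) < 1/(real k+1)"
    by metis
  have gb: "\<bar>g k i\<bar> \<le> 1" for k i
  proof (cases "i < n")
    case True
    hence "\<bar>g k i\<bar> \<le> l1 n (g k)" unfolding l1_def by (intro member_le_sum) auto
    thus ?thesis using g(2) by simp
  next
    case False thus ?thesis using g(1)[of k] by (simp add: coord_space_def)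
  qed
  obtain r where r: "strict_mono r" "\<forall>i<n. convergent (\<lambda>k. g (r k) i)"
    using CB[of g 1 n] gb by blast
  obtain u where u: "u \<in> V" "\<forall>i<n. (\<lambda>k. g (r k) i) \<longlonglongrightarrow> u i" "(\<lambda>k. l1 n (vsub (g (r k)) u)) \<longlonglongrightarrow> 0"
    using limvec[where g="\<lambda>k. g (r k)"] r by blast
  have "(\<lambda>k. l1 n (g (r k))) \<longlonglongrightarrow> l1 n u" unfolding l1_def
    by (intro tendsto_intros) (use u in auto)
  hence "l1 n u = 1" using g(2) by (simp add: LIMSEQ_const_iff)
  obtain C where C: "C \<ge> 0" "\<forall>v\<in>V. N v \<le> C * l1 n v" using upper unfolding l1_def by blast
  have b: "N u \<le> 1/(real k+1) + C * l1 n (vsub (g (r k)) u)" for k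
  proof -
    have "N u \<le> N (g (r k)) + N (vsub u (g (r k)))"
      using N_rev[OF u(1) g(1)[of "r k"]] by simp
    also have "N (vsub u (g (r k))) = N (vsub (g (r k)) u)" using N_comm u g by blast
    finally have A: "N u \<le> N (g (r k)) + N (vsub (g (r k)) u)" .
    have "N (g (r k)) \<le> 1/(real k+1)"
    proof -
      have "k \<le> r k" using r(1) seq_suble by blast
      hence "1/(real (r k)+1) \<le> 1/(real k+1)" by (simp add: frac_le)
      thus ?thesis using g(3)[of "r k"] by linarith
    qed
    moreover have "N (vsub (g (r k)) u) \<le> C * l1 n (vsub (g (r k)) u)" using C(2) g(1) u(1) cs_sub by blast
    ultimately show ?thesis using A by linarith
  qed
  have i0: "(\<lambda>k. 1/(real k+1)) \<longlonglongrightarrow> 0"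
    using LIMSEQ_inverse_real_of_nat by (simp add: inverse_eq_divide add.commute)
  have "(\<lambda>k. 1/(real k+1) + C * l1 n (vsub (g (r k)) u)) \<longlonglongrightarrow> 0 + C * 0"
    by (rule tendsto_add[OF i0 tendsto_mult[OF tendsto_const u(3)]])
  hence "N u \<le> 0" using b by (intro LIMSEQ_le_const) auto
  hence "u = (\<lambda>i. 0)" using N_nonneg[OF u(1)] N_eq0[OF u(1)] by simp
  hence "l1 n u = 0" by (simp add: l1_def)
  thus False using \<open>l1 n u = 1\<close> by simp
qed

lemma bolzano:
  fixes s :: "nat \<Rightarrow> nat \<Rightarrow> real"
  assumes s: "\<And>k. s k \<in> V" and B: "\<And>k. N (s k) \<le> B"
  shows "\<exists>r u. strict_mono r \<and> u \<in> V \<and> (\<lambda>k. N (vsub (s (r k)) u)) \<longlonglongrightarrow> 0"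
proof -
  obtain c where c: "c > 0" "\<forall>v\<in>V. c * l1 n v \<le> N v" using lower by blast
  have sb: "\<bar>s k i\<bar> \<le> B / c" for k i
  proof (cases "i < n")
    case True
    hence "\<bar>s k i\<bar> \<le> l1 n (s k)" unfolding l1_def by (intro member_le_sum) auto
    also have "\<dots> \<le> B / c"
    proof -
      have "c * l1 n (s k) \<le> B" using c(2) s[of k] B[of k] by (meson order_trans)
      thus ?thesis using c(1) by (simp add: pos_le_divide_eq mult.commute)
    qed
    finally show ?thesis .
  next
    case False
    have "0 \<le> B" using N_nonneg[OF s] B by (meson order_trans)
    thus ?thesis using s[of k] False c by (simp add: coord_space_def)
  qed
  obtain r where r: "strict_mono r" "\<forall>i<n. convergent (\<lambda>k. s (r k) i)"
    using CB[of s "B/c" n] sb by blast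
  obtain u where u: "u \<in> V" "(\<lambda>k. l1 n (vsub (s (r k)) u)) \<longlonglongrightarrow> 0"
    using limvec[where g="\<lambda>k. s (r k)"] r by blast
  obtain C where C: "C \<ge> 0" "\<forall>v\<in>V. N v \<le> C * l1 n v" using upper unfolding l1_def by blast
  have lim0: "(\<lambda>k. C * l1 n (vsub (s (r k)) u)) \<longlonglongrightarrow> 0"
    using tendsto_mult[OF tendsto_const u(2), of C] by simp
  have ev: "eventually (\<lambda>k. norm (N (vsub (s (r k)) u)) \<le> C * l1 n (vsub (s (r k)) u)) sequentially"
  proof (rule always_eventually, rule allI)
    fix k
    have m: "vsub (s (r k)) u \<in> V" using s u by blast
    show "norm (N (vsub (s (r k)) u)) \<le> C * l1 n (vsub (s (r k)) u)"
      using C(2) m N_nonneg[OF m] by simp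
  qed
  have "(\<lambda>k. N (vsub (s (r k)) u)) \<longlonglongrightarrow> 0" by (rule Lim_null_comparison[OF ev lim0])
  thus ?thesis using r u by blast
qed
end
lemma RI:
  fixes x y \<beta> :: real
  assumes b: "\<beta> > 1" and x: "x > 0" and y: "y > 0" and yk: "y \<le> ((1/4) powr (1/(\<beta>-1))) * x"
  shows "(x + y/2) powr \<beta> > x powr \<beta> + y powr \<beta>"
proof -
  define z where "z = y / x"
  have z0: "z > 0" using x y by (simp add: z_def)
  have zk: "z \<le> (1/4) powr (1/(\<beta>-1))" using yk x by (simp add: z_def pos_divide_le_eq)
  have "z powr (\<beta>-1) \<le> ((1/4) powr (1/(\<beta>-1))) powr (\<beta>-1)"
    using zk z0 b by (intro powr_mono2) auto
  also have "\<dots> = 1/4" using b by (simp add: powr_powr)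
  finally have zb: "z powr (\<beta>-1) \<le> 1/4" .
  have "z powr \<beta> = z * z powr (\<beta>-1)" using z0 by (simp add: powr_diff)
  hence zb2: "z powr \<beta> \<le> z/4" using zb z0 by (metis mult_left_mono less_imp_le mult.commute mult_1 times_divide_eq_left)
  have "1 + z/2 \<le> (1 + z/2) powr \<beta>"
  proof -
    have "(1 + z/2) powr 1 \<le> (1 + z/2) powr \<beta>" using b z0 by (intro powr_mono) auto
    thus ?thesis using z0 by simp
  qed
  have y_eq: "y = x * z" using x by (simp add: z_def)
  have "x powr \<beta> + y powr \<beta> = x powr \<beta> * (1 + z powr \<beta>)"
    using x z0 by (simp add: y_eq powr_mult algebra_simps)
  also have "\<dots> < x powr \<beta> * (1 + z/2)" using zb2 z0 x by (intro mult_strict_left_mono) auto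
  also have "\<dots> \<le> x powr \<beta> * (1 + z/2) powr \<beta>" using \<open>1 + z/2 \<le> _\<close> x by (intro mult_left_mono) auto
  also have "\<dots> = (x * (1 + z/2)) powr \<beta>" using x z0 by (simp add: powr_mult)
  also have "x * (1 + z/2) = x + y/2" by (simp add: y_eq algebra_simps)
  finally show ?thesis .
qed

context nrm begin

lemma sc_sub: "vsub (vsc x w) (vsc y w) = vsc (x - y) w" by (rule ext) (simp add: vsub_def vsc_def algebra_simps)

lemma D:
  assumes A: "A \<in> V" and w: "w \<in> V" "N w = 1" and x: "x > 0"
    and e: "N (vsub A (vsc x w)) \<le> \<eta> * x" and eta: "0 \<le> \<eta>" "\<eta> \<le> 1/10"
  shows "(1-\<eta>) * x \<le> N A" "N A \<le> (1+\<eta>) * x" "N (vsub A (vsc (N A) w)) \<le> N A / 4"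
proof -
  have nx: "N (vsc x w) = x" using N_sc[OF w(1)] w x by simp
  have d: "\<bar>N A - x\<bar> \<le> \<eta> * x" using N_rev_abs[OF A cs_sc[OF w(1)], of x] nx e by simp
  thus "(1-\<eta>) * x \<le> N A" "N A \<le> (1+\<eta>) * x" by (auto simp: algebra_simps abs_le_iff)
  have "N (vsub A (vsc (N A) w)) \<le> N (vsub A (vsc x w)) + N (vsub (vsc x w) (vsc (N A) w))"
    using N_subtri A w by blast
  also have "N (vsub (vsc x w) (vsc (N A) w)) = \<bar>x - N A\<bar>" using N_sc[OF w(1)] w by (simp add: sc_sub)
  finally have "N (vsub A (vsc (N A) w)) \<le> 2 * \<eta> * x" using d e by (simp add: abs_minus_commute)
  also have "\<dots> \<le> N A / 4"
  proof -
    have "\<eta> * x \<le> x/10" using eta x by (simp add: mult_right_mono)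
    thus ?thesis using d by (auto simp: abs_le_iff algebra_simps)
  qed
  finally show "N (vsub A (vsc (N A) w)) \<le> N A / 4" .
qed

lemma K:
  assumes A: "A \<in> V" and B: "B \<in> V" and w: "w \<in> V" "N w = 1"
    and a: "N A > 0" and b: "N B > 0"
    and eA: "N (vsub A (vsc (N A) w)) \<le> N A / 4" and eB: "N (vsub B (vsc (N B) w)) \<le> N B / 4"
  shows "N A + N B / 2 \<le> N (vadd A B)"
proof -
  define a' b' where "a' = N A" "b' = N B"
  define R where "R = vsub B (vsc (b'/a') A)"
  have RV: "R \<in> V" using A B by (auto simp: R_def)
  have R_eq: "R = vadd (vsub B (vsc b' w)) (vsc (b'/a') (vsub (vsc a' w) A))"
    using a by (intro ext) (simp add: R_def vsub_def vadd_def vsc_def a'_b'_def field_simps)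
  have "N R \<le> N (vsub B (vsc b' w)) + N (vsc (b'/a') (vsub (vsc a' w) A))"
    unfolding R_eq using A B w by (intro N_add) auto
  also have "N (vsc (b'/a') (vsub (vsc a' w) A)) = (b'/a') * N (vsub A (vsc a' w))"
  proof -
    have m: "vsub (vsc a' w) A \<in> V" "vsc a' w \<in> V" using A w by auto
    show ?thesis using N_sc[OF m(1), of "b'/a'"] N_comm[OF m(2) A] a b
      by (simp add: a'_b'_def)
  qed
  also have "\<dots> \<le> (b'/a') * (a'/4)" using eA a b by (intro mult_left_mono) (auto simp: a'_b'_def)
  also have "\<dots> = b'/4" using a by (simp add: a'_b'_def)
  finally have NR: "N R \<le> b'/2" using eB by (simp add: a'_b'_def)
  have eq: "vsc (1 + b'/a') A = vadd (vadd A B) (vsc (-1) R)"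
    by (intro ext) (simp add: R_def vsub_def vadd_def vsc_def algebra_simps)
  have "N (vsc (1 + b'/a') A) \<le> N (vadd A B) + N (vsc (-1) R)"
    unfolding eq using A B RV by (intro N_add) auto
  moreover have "N (vsc (1 + b'/a') A) = a' + b'"
  proof -
    have p: "0 \<le> 1 + b'/a'" using a b unfolding a'_b'_def by (simp add: less_imp_le add_nonneg_nonneg)
    have "N (vsc (1 + b'/a') A) = (1 + b'/a') * a'" using N_sc[OF A, of "1 + b'/a'"] p
      by (simp only: abs_of_nonneg a'_b'_def)
    also have "\<dots> = a' + b'" using a by (simp add: field_simps a'_b'_def)
    finally show ?thesis .
  qed
  moreover have "N (vsc (-1) R) = N R" using N_sc[OF RV, of "-1"] by simp
  ultimately show ?thesis using NR by (simp add: a'_b'_def)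
qed
end


context nrm begin

lemma core:
  fixes \<beta> :: real and t :: "nat \<Rightarrow> nat \<Rightarrow> real" and \<rho> :: "nat \<Rightarrow> real"
  assumes b: "\<beta> > 1"
    and P: "\<And>a b c. a \<in> S \<Longrightarrow> b \<in> S \<Longrightarrow> c \<in> S \<Longrightarrow>
              N (vsub a c) powr \<beta> \<le> N (vsub a b) powr \<beta> + N (vsub b c) powr \<beta>"
    and SV: "S \<subseteq> V" and tS: "\<And>k. t k \<in> S" and q: "q \<in> V" and w: "w \<in> V" "N w = 1"
    and rho: "\<And>k. \<rho> k = N (vsub (t k) q)"
    and pos: "eventually (\<lambda>k. \<rho> k > 0) sequentially"
    and dir: "\<And>\<epsilon>. \<epsilon> > 0 \<Longrightarrow> eventually (\<lambda>k. N (vsub (vsub (t k) q) (vsc (\<rho> k) w)) \<le> \<epsilon> * \<rho> k) sequentially"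
    and lim: "\<rho> \<longlonglongrightarrow> 0 \<or> filterlim \<rho> at_top sequentially"
  shows False
proof -
  define \<kappa> where "\<kappa> = (1/4::real) powr (1/(\<beta>-1))"
  have kp: "\<kappa> > 0" by (simp add: \<kappa>_def)
  define \<delta> where "\<delta> = min (1/40) (\<kappa>/2)"
  have dp: "\<delta> > 0" "\<delta> \<le> 1/40" "\<delta> \<le> \<kappa>/2" using kp by (auto simp: \<delta>_def)
  define \<epsilon> :: real where "\<epsilon> = 1/40"
  define E where "E k = vsub (vsub (t k) q) (vsc (\<rho> k) w)" for k
  have tV: "t k \<in> V" for k using tS SV by blast
  have EV: "E k \<in> V" for k using tV q w by (auto simp: E_def)
  obtain K where KK: "\<And>k. k \<ge> K \<Longrightarrow> \<rho> k > 0 \<and> N (E k) \<le> \<epsilon> * \<rho> k"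
    using eventually_conj[OF pos dir[of \<epsilon>]] unfolding eventually_sequentially E_def \<epsilon>_def by auto
  have "\<exists>i j k. i \<ge> K \<and> j \<ge> K \<and> k \<ge> K \<and> \<rho> j \<le> \<delta> * \<rho> i \<and> \<rho> k \<le> \<delta> * \<rho> j"
    using lim
  proof
    assume l0: "\<rho> \<longlonglongrightarrow> 0"
    have nxt: "\<exists>j\<ge>K. \<rho> j \<le> \<delta> * \<rho> i" if "i \<ge> K" for i
    proof -
      have "0 < \<delta> * \<rho> i" using KK[OF that] dp by simp
      then have "eventually (\<lambda>j. \<rho> j < \<delta> * \<rho> i) sequentially" using order_tendstoD(2)[OF l0] by blast
      then obtain M where M: "\<And>j. j \<ge> M \<Longrightarrow> \<rho> j < \<delta> * \<rho> i" unfolding eventually_sequentially by blast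
      have "\<rho> (max K M) < \<delta> * \<rho> i" by (rule M) simp
      thus ?thesis by (intro exI[of _ "max K M"]) auto
    qed
    obtain j where j: "j \<ge> K" "\<rho> j \<le> \<delta> * \<rho> K" using nxt[of K] by auto
    obtain k where k: "k \<ge> K" "\<rho> k \<le> \<delta> * \<rho> j" using nxt[OF j(1)] by auto
    show ?thesis using j k by blast
  next
    assume li: "filterlim \<rho> at_top sequentially"
    have nxt: "\<exists>j\<ge>K. \<rho> i \<le> \<delta> * \<rho> j" if "i \<ge> K" for i
    proof -
      have "eventually (\<lambda>j. \<rho> i / \<delta> \<le> \<rho> j) sequentially" using li by (simp add: filterlim_at_top)
      then obtain M where M: "\<And>j. j \<ge> M \<Longrightarrow> \<rho> i / \<delta> \<le> \<rho> j" unfolding eventually_sequentially by blast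
      have "\<rho> i \<le> \<delta> * \<rho> (max K M)" using M[of "max K M"] dp by (simp add: pos_divide_le_eq mult.commute)
      thus ?thesis by (intro exI[of _ "max K M"]) auto
    qed
    obtain j where j: "j \<ge> K" "\<rho> K \<le> \<delta> * \<rho> j" using nxt[of K] by auto
    obtain i where i: "i \<ge> K" "\<rho> j \<le> \<delta> * \<rho> i" using nxt[OF j(1)] by auto
    show ?thesis using i j by blast
  qed
  then obtain i j k where ijk: "i \<ge> K" "j \<ge> K" "k \<ge> K" "\<rho> j \<le> \<delta> * \<rho> i" "\<rho> k \<le> \<delta> * \<rho> j" by blast
  define \<eta> where "\<eta> = \<delta> + 2 * \<epsilon>"
  have eta: "0 \<le> \<eta>" "\<eta> \<le> 1/10" using dp by (auto simp: \<eta>_def \<epsilon>_def)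
  have pair: "N (vsub (vsub (t a) (t c)) (vsc (\<rho> a) w)) \<le> \<eta> * \<rho> a"
    if ac: "a \<ge> K" "c \<ge> K" "\<rho> c \<le> \<delta> * \<rho> a" for a c
  proof -
    have eq: "vsub (vsub (t a) (t c)) (vsc (\<rho> a) w) = vsub (vsub (E a) (E c)) (vsc (\<rho> c) w)"
      by (intro ext) (simp add: E_def vsub_def vsc_def)
    have "N (vsub (vsub (E a) (E c)) (vsc (\<rho> c) w)) \<le> N (vsub (E a) (E c)) + N (vsc (\<rho> c) w)"
    proof -
      have "vsub (vsub (E a) (E c)) (vsc (\<rho> c) w) = vadd (vsub (E a) (E c)) (vsc (-1) (vsc (\<rho> c) w))"
        by (intro ext) (simp add: vsub_def vsc_def vadd_def)
      moreover have "N (vsc (-1) (vsc (\<rho> c) w)) = N (vsc (\<rho> c) w)" using N_sc[of "vsc (\<rho> c) w" "-1"] w by auto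
      ultimately show ?thesis using N_add[of "vsub (E a) (E c)" "vsc (-1) (vsc (\<rho> c) w)"] EV w by auto
    qed
    also have "N (vsub (E a) (E c)) \<le> N (E a) + N (E c)"
    proof -
      have "vsub (E a) (E c) = vadd (E a) (vsc (-1) (E c))" by (intro ext) (simp add: vsub_def vsc_def vadd_def)
      moreover have "N (vsc (-1) (E c)) = N (E c)" using N_sc[of "E c" "-1"] EV by auto
      ultimately show ?thesis using N_add[of "E a" "vsc (-1) (E c)"] EV by auto
    qed
    also have "N (vsc (\<rho> c) w) = \<rho> c" using N_sc[OF w(1), of "\<rho> c"] w KK[OF ac(2)] by simp
    finally have "N (vsub (vsub (t a) (t c)) (vsc (\<rho> a) w)) \<le> N (E a) + N (E c) + \<rho> c"
      using eq by simp
    moreover have "N (E a) \<le> \<epsilon> * \<rho> a" "N (E c) \<le> \<epsilon> * \<rho> c" using KK ac by auto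
    moreover have "\<rho> c \<le> \<rho> a"
    proof -
      have "\<delta> * \<rho> a \<le> 1 * \<rho> a" using dp KK[OF ac(1)] by (intro mult_right_mono) auto
      thus ?thesis using ac(3) by linarith
    qed
    moreover have "\<epsilon> * \<rho> c \<le> \<epsilon> * \<rho> a" using \<open>\<rho> c \<le> \<rho> a\<close> by (simp add: \<epsilon>_def)
    ultimately show ?thesis using ac(3) by (simp add: \<eta>_def algebra_simps)
  qed
  define A where "A = vsub (t i) (t j)"
  define B where "B = vsub (t j) (t k)"
  have AV: "A \<in> V" and BV: "B \<in> V" using tV by (auto simp: A_def B_def)
  have ri: "\<rho> i > 0" and rj: "\<rho> j > 0" using KK ijk by auto
  have pA: "N (vsub A (vsc (\<rho> i) w)) \<le> \<eta> * \<rho> i" using pair[of i j] ijk by (simp add: A_def)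
  have pB: "N (vsub B (vsc (\<rho> j) w)) \<le> \<eta> * \<rho> j" using pair[of j k] ijk by (simp add: B_def)
  note DA = D[OF AV w ri pA eta] and DB = D[OF BV w rj pB eta]
  have "0 < (1-\<eta>) * \<rho> i" "0 < (1-\<eta>) * \<rho> j" using eta ri rj by auto
  hence NA: "N A > 0" and NB: "N B > 0" using DA(1) DB(1) by linarith+
  have ineq: "N A + N B / 2 \<le> N (vadd A B)" using K[OF AV BV w NA NB DA(3) DB(3)] .
  have NBk: "N B \<le> \<kappa> * N A"
  proof -
    have "N B \<le> (1+\<eta>) * \<rho> j" by (rule DB(2))
    also have "\<dots> \<le> (1+\<eta>) * (\<delta> * \<rho> i)" using ijk(4) eta by (intro mult_left_mono) auto
    also have "\<dots> \<le> 2 * \<delta> * ((1-\<eta>) * \<rho> i)"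
    proof -
      have "(1+\<eta>) \<le> 2 * (1-\<eta>)" using eta by simp
      hence "(1+\<eta>) * (\<delta> * \<rho> i) \<le> (2 * (1-\<eta>)) * (\<delta> * \<rho> i)" using dp ri by (intro mult_right_mono) auto
      thus ?thesis by (simp add: algebra_simps)
    qed
    also have "\<dots> \<le> 2 * \<delta> * N A" using DA(1) dp by (intro mult_left_mono) auto
    also have "\<dots> \<le> \<kappa> * N A" using dp NA by (intro mult_right_mono) auto
    finally show ?thesis .
  qed
  have AB: "vadd A B = vsub (t i) (t k)" by (intro ext) (simp add: A_def B_def vadd_def vsub_def)
  have "(N A + N B / 2) powr \<beta> > N A powr \<beta> + N B powr \<beta>"
    using RI[OF b NA NB] NBk by (simp add: \<kappa>_def)
  also have "(N A + N B / 2) powr \<beta> \<le> N (vadd A B) powr \<beta>"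
    using ineq NA NB b by (intro powr_mono2) auto
  also have "N (vadd A B) powr \<beta> \<le> N A powr \<beta> + N B powr \<beta>"
    using P[OF tS[of i] tS[of j] tS[of k]] AB by (simp add: A_def B_def)
  finally show False by simp
qed
end


context nrm begin

lemma dirs:
  fixes t :: "nat \<Rightarrow> nat \<Rightarrow> real"
  assumes tV: "\<And>k. t k \<in> V" and q: "q \<in> V"
    and pos: "eventually (\<lambda>k. N (vsub (t k) q) > 0) sequentially"
  shows "\<exists>r w. strict_mono r \<and> w \<in> V \<and> N w = 1 \<and>
     (\<forall>\<epsilon>>0. eventually (\<lambda>k. N (vsub (vsub (t (r k)) q) (vsc (N (vsub (t (r k)) q)) w)) \<le> \<epsilon> * N (vsub (t (r k)) q)) sequentially)"
proof -
  define \<rho> where "\<rho> k = N (vsub (t k) q)" for k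
  define wd where "wd k = vsc (if \<rho> k > 0 then 1 / \<rho> k else 0) (vsub (t k) q)" for k
  have dV: "vsub (t k) q \<in> V" for k using tV q by blast
  have wdV: "wd k \<in> V" for k using dV by (auto simp: wd_def)
  have Nwd: "N (wd k) = (if \<rho> k > 0 then 1 else 0)" for k
    using N_sc[OF dV[of k]] by (auto simp: wd_def \<rho>_def)
  have Nwd1: "N (wd k) \<le> 1" for k using Nwd[of k] by simp
  obtain r w where r: "strict_mono r" "w \<in> V" "(\<lambda>k. N (vsub (wd (r k)) w)) \<longlonglongrightarrow> 0"
    using bolzano[where s=wd and B=1, OF wdV Nwd1] by blast
  have posr: "eventually (\<lambda>k. \<rho> (r k) > 0) sequentially"
    using eventually_subseq[OF r(1) pos] by (simp add: \<rho>_def)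
  have small: "eventually (\<lambda>k. N (vsub (wd (r k)) w) < e) sequentially" if "e > 0" for e
    using order_tendstoD(2)[OF r(3) that] .
  have Nw: "N w = 1"
  proof (rule ccontr)
    assume ne: "N w \<noteq> 1"
    define e where "e = \<bar>N w - 1\<bar>"
    have e: "e > 0" using ne by (simp add: e_def)
    obtain k where k: "\<rho> (r k) > 0" "N (vsub (wd (r k)) w) < e"
      using eventually_happens'[OF _ eventually_conj[OF posr small[OF e]]] by auto
    have "\<bar>N (wd (r k)) - N w\<bar> \<le> N (vsub (wd (r k)) w)" using N_rev_abs[OF wdV r(2)] by blast
    thus False using k Nwd[of "r k"] by (simp add: e_def)
  qed
  have "\<forall>\<epsilon>>0. eventually (\<lambda>k. N (vsub (vsub (t (r k)) q) (vsc (\<rho> (r k)) w)) \<le> \<epsilon> * \<rho> (r k)) sequentially"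
  proof (intro allI impI)
    fix \<epsilon> :: real assume ep: "\<epsilon> > 0"
    show "eventually (\<lambda>k. N (vsub (vsub (t (r k)) q) (vsc (\<rho> (r k)) w)) \<le> \<epsilon> * \<rho> (r k)) sequentially"
      using eventually_conj[OF posr small[OF ep]]
    proof (rule eventually_mono)
      fix k assume h: "0 < \<rho> (r k) \<and> N (vsub (wd (r k)) w) < \<epsilon>"
      have eq: "vsub (vsub (t (r k)) q) (vsc (\<rho> (r k)) w) = vsc (\<rho> (r k)) (vsub (wd (r k)) w)"
        using h by (intro ext) (simp add: wd_def vsub_def vsc_def field_simps)
      have "N (vsc (\<rho> (r k)) (vsub (wd (r k)) w)) = \<rho> (r k) * N (vsub (wd (r k)) w)"
      proof -
        have m: "vsub (wd (r k)) w \<in> V" using wdV r(2) by blast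
        show ?thesis using N_sc[OF m, of "\<rho> (r k)"] h by simp
      qed
      also have "\<dots> \<le> \<rho> (r k) * \<epsilon>" using h by (intro mult_left_mono) auto
      finally show "N (vsub (vsub (t (r k)) q) (vsc (\<rho> (r k)) w)) \<le> \<epsilon> * \<rho> (r k)"
        by (simp add: eq mult.commute)
    qed
  qed
  hence X: "\<forall>\<epsilon>>0. eventually (\<lambda>k. N (vsub (vsub (t (r k)) q) (vsc (N (vsub (t (r k)) q)) w)) \<le> \<epsilon> * N (vsub (t (r k)) q)) sequentially"
    unfolding \<rho>_def .
  show ?thesis by (intro exI[of _ r] exI[of _ w] conjI r(1) r(2) Nw X)
qed

lemma apply_core:
  fixes \<beta> :: real and t :: "nat \<Rightarrow> nat \<Rightarrow> real"
  assumes b: "\<beta> > 1"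
    and P: "\<And>a b c. a \<in> S \<Longrightarrow> b \<in> S \<Longrightarrow> c \<in> S \<Longrightarrow>
              N (vsub a c) powr \<beta> \<le> N (vsub a b) powr \<beta> + N (vsub b c) powr \<beta>"
    and SV: "S \<subseteq> V" and tS: "\<And>k. t k \<in> S" and q: "q \<in> V"
    and pos: "eventually (\<lambda>k. N (vsub (t k) q) > 0) sequentially"
    and lim: "(\<lambda>k. N (vsub (t k) q)) \<longlonglongrightarrow> 0 \<or> filterlim (\<lambda>k. N (vsub (t k) q)) at_top sequentially"
  shows False
proof -
  have tV: "t k \<in> V" for k using tS SV by blast
  obtain r w where r: "strict_mono r" "w \<in> V" "N w = 1"
    "\<forall>\<epsilon>>0. eventually (\<lambda>k. N (vsub (vsub (t (r k)) q) (vsc (N (vsub (t (r k)) q)) w)) \<le> \<epsilon> * N (vsub (t (r k)) q)) sequentially"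
    using dirs[where t=t and q=q, OF tV q pos] by blast
  show False
  proof (rule core[where S=S, OF b P SV, where t="\<lambda>k. t (r k)" and q=q and w=w and \<rho>="\<lambda>k. N (vsub (t (r k)) q)"])
    show "eventually (\<lambda>k. 0 < N (vsub (t (r k)) q)) sequentially" using eventually_subseq[OF r(1) pos] .
    show "(\<lambda>k. N (vsub (t (r k)) q)) \<longlonglongrightarrow> 0 \<or> filterlim (\<lambda>k. N (vsub (t (r k)) q)) at_top sequentially"
      using lim
    proof
      assume "(\<lambda>k. N (vsub (t k) q)) \<longlonglongrightarrow> 0"
      from LIMSEQ_subseq_LIMSEQ[OF this r(1)] show ?thesis by (simp add: comp_def)
    next
      assume "filterlim (\<lambda>k. N (vsub (t k) q)) at_top sequentially"
      from filterlim_compose[OF this filterlim_subseq[OF r(1)]] show ?thesis by simp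
    qed
  qed (use tS q r in auto)
qed
end


context nrm begin

lemma no_infinite:
  fixes \<beta> :: real
  assumes b: "\<beta> > 1"
    and P: "\<And>a b c. a \<in> S \<Longrightarrow> b \<in> S \<Longrightarrow> c \<in> S \<Longrightarrow>
              N (vsub a c) powr \<beta> \<le> N (vsub a b) powr \<beta> + N (vsub b c) powr \<beta>"
    and SV: "S \<subseteq> V" and inf: "infinite S"
  shows False
proof -
  obtain s :: "nat \<Rightarrow> nat \<Rightarrow> real" where s: "inj s" "range s \<subseteq> S"
    using infinite_countable_subset[OF inf] by blast
  have sS: "s k \<in> S" for k using s by blast
  have sV: "s k \<in> V" for k using sS SV by blast
  have Npos: "0 < N (vsub a u) \<longleftrightarrow> a \<noteq> u" if "a \<in> V" "u \<in> V" for a u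
  proof -
    have m: "vsub a u \<in> V" using that by blast
    have "vsub a u = (\<lambda>i. 0) \<longleftrightarrow> a = u" by (auto simp: vsub_def fun_eq_iff)
    thus ?thesis using N_eq0[OF m] N_nonneg[OF m] by linarith
  qed
  show False
  proof (cases "\<exists>B. \<forall>k. N (s k) \<le> B")
    case True
    then obtain B where B: "\<And>k. N (s k) \<le> B" by blast
    obtain r u where r: "strict_mono r" "u \<in> V" "(\<lambda>k. N (vsub (s (r k)) u)) \<longlonglongrightarrow> 0"
      using bolzano[where s=s and B=B, OF sV B] by blast
    have uniq: "k = k'" if "s (r k) = u" "s (r k') = u" for k k'
      using that s(1) r(1) by (metis injD strict_mono_eq)
    have ev: "eventually (\<lambda>k. s (r k) \<noteq> u) sequentially"
    proof (cases "\<exists>k0. s (r k0) = u")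
      case True
      then obtain k0 where k0: "s (r k0) = u" by blast
      show ?thesis unfolding eventually_sequentially
        by (rule exI[of _ "Suc k0"]) (use uniq k0 in fastforce)
    next
      case False thus ?thesis by (simp add: always_eventually)
    qed
    have pos: "eventually (\<lambda>k. N (vsub (s (r k)) u) > 0) sequentially"
      using ev by (rule eventually_mono) (use Npos sV r(2) in blast)
    show False
      apply (rule apply_core[where S=S and t="\<lambda>k. s (r k)" and q=u, OF b _ SV sS r(2) pos])
       apply (rule P; assumption)
      by (rule disjI1[OF r(3)])
  next
    case False
    have big: "\<exists>k\<ge>K. N (s k) > B" for B K
    proof (rule ccontr)
      assume "\<not> ?thesis"
      hence h: "\<And>k. k \<ge> K \<Longrightarrow> N (s k) \<le> B" by (auto simp: not_less)
      have "N (s k) \<le> max B 0 + (\<Sum>j<K. N (s j))" for k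
      proof (cases "k < K")
        case True
        have "N (s k) \<le> (\<Sum>j<K. N (s j))"
          using True N_nonneg[OF sV] by (intro member_le_sum) auto
        thus ?thesis by linarith
      next
        case False
        have "0 \<le> (\<Sum>j<K. N (s j))" using N_nonneg[OF sV] by (intro sum_nonneg) auto
        thus ?thesis using h[of k] False by linarith
      qed
      thus False using \<open>\<not> (\<exists>B. \<forall>k. N (s k) \<le> B)\<close> by blast
    qed
    define g where "g B K = (SOME k. k \<ge> K \<and> N (s k) > B)" for B K
    have g: "g B K \<ge> K \<and> N (s (g B K)) > B" for B K
      unfolding g_def by (rule someI_ex) (use big in blast)
    define q where "q = s 0"
    define r where "r = rec_nat (g (N q) 0) (\<lambda>m rm. g (real (Suc m) + N q) (Suc rm))"
    have r0: "r 0 = g (N q) 0" and rS: "r (Suc m) = g (real (Suc m) + N q) (Suc (r m))" for m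
      by (simp_all add: r_def)
    have rmono: "strict_mono r" unfolding strict_mono_Suc_iff
      using g rS by (metis Suc_le_lessD)
    have rb: "N (s (r m)) > real m + N q" for m
      by (cases m) (use g r0 rS in auto)
    have qV: "q \<in> V" by (simp add: q_def sV)
    have rho: "N (vsub (s (r m)) q) > real m" for m
      using N_rev[OF sV qV, of "r m"] rb[of m] by linarith
    have pos: "eventually (\<lambda>k. N (vsub (s (r k)) q) > 0) sequentially"
      by (rule always_eventually) (use rho in \<open>auto intro: le_less_trans[OF of_nat_0_le_iff]\<close>)
    have lim: "filterlim (\<lambda>k. N (vsub (s (r k)) q)) at_top sequentially"
      by (rule filterlim_at_top_mono[OF filterlim_real_sequentially])
         (use rho in \<open>auto intro: always_eventually less_imp_le\<close>)
    show False
      apply (rule apply_core[where S=S and t="\<lambda>k. s (r k)" and q=q, OF b _ SV sS qV pos])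
       apply (rule P; assumption)
      by (rule disjI2[OF lim])
  qed
qed
end



lemma sqrt_metric:
  assumes "Metric_space X d"
  shows "Metric_space X (\<lambda>x y. sqrt (d x y))"
proof -
  interpret Metric_space X d by fact
  show ?thesis
  proof
    fix x y z assume xyz: "x \<in> X" "y \<in> X" "z \<in> X"
    have "sqrt (d x z) \<le> sqrt (d x y + d y z)" using triangle[OF xyz] by simp
    also have "\<dots> \<le> sqrt (d x y) + sqrt (d y z)" by (rule sqrt_add_le_add_sqrt) auto
    finally show "sqrt (d x z) \<le> sqrt (d x y) + sqrt (d y z)" .
  qed (auto simp: commute)
qed

lemma finite_embeds:
  assumes M: "Metric_space X D" and fin: "finite X"
  shows "embeds_isometrically_fin_dim_normed X D"
proof -
  interpret Metric_space X D by fact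
  obtain g where g: "bij_betw g {0..<card X} X" using ex_bij_betw_nat_finite[OF fin] by blast
  define m where "m = card X"
  define f where "f x = (\<lambda>i. if i < m then D x (g i) else 0)" for x
  define N :: "(nat \<Rightarrow> real) \<Rightarrow> real" where "N v = Max (insert 0 ((\<lambda>i. \<bar>v i\<bar>) ` {..<m}))" for v
  have fin2: "finite (insert 0 ((\<lambda>i. \<bar>v i\<bar>) ` {..<m}))" for v :: "nat \<Rightarrow> real" by simp
  have ge: "\<bar>v i\<bar> \<le> N v" if "i < m" for v i unfolding N_def by (rule Max_ge[OF fin2]) (use that in auto)
  have ge0: "0 \<le> N v" for v unfolding N_def by (rule Max_ge[OF fin2]) auto
  have le: "N v \<le> c" if "0 \<le> c" "\<And>i. i < m \<Longrightarrow> \<bar>v i\<bar> \<le> c" for v c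
    unfolding N_def using that by (subst Max_le_iff[OF fin2]) auto
  have Nsc: "N (\<lambda>i. c * v i) = \<bar>c\<bar> * N v" for c v
  proof (rule antisym)
    show "N (\<lambda>i. c * v i) \<le> \<bar>c\<bar> * N v"
      by (rule le) (auto simp: abs_mult ge0 intro: mult_left_mono ge)
    show "\<bar>c\<bar> * N v \<le> N (\<lambda>i. c * v i)"
    proof (cases "c = 0")
      case True thus ?thesis by (simp add: ge0)
    next
      case False
      have "N v \<le> N (\<lambda>i. c * v i) / \<bar>c\<bar>"
      proof (rule le)
        show "0 \<le> N (\<lambda>i. c * v i) / \<bar>c\<bar>" using ge0 by simp
        fix i assume i: "i < m"
        have "\<bar>c\<bar> * \<bar>v i\<bar> \<le> N (\<lambda>i. c * v i)" using ge[of i "\<lambda>i. c * v i", OF i] by (simp add: abs_mult)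
        thus "\<bar>v i\<bar> \<le> N (\<lambda>i. c * v i) / \<bar>c\<bar>" using False by (simp add: pos_le_divide_eq mult.commute)
      qed
      thus ?thesis using False by (simp add: pos_le_divide_eq mult.commute)
    qed
  qed
  have norm: "is_norm_on_Rn m N"
    unfolding is_norm_on_Rn_def
  proof (intro conjI ballI allI)
    fix v assume v: "v \<in> coord_space m"
    show "0 \<le> N v" by (rule ge0)
    show "N v = 0 \<longleftrightarrow> v = (\<lambda>i. 0)"
    proof
      assume "N v = 0"
      hence z: "\<And>i. i < m \<Longrightarrow> v i = 0" using ge[of _ v] by (metis abs_le_zero_iff)
      show "v = (\<lambda>i. 0)"
      proof (rule ext)
        fix i show "v i = 0"
        proof (cases "i < m")
          case True thus ?thesis using z by blast
        next
          case False thus ?thesis using v by (simp add: coord_space_def)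
        qed
      qed
    next
      assume "v = (\<lambda>i. 0)"
      thus "N v = 0" using le[of 0 v] ge0[of v] by auto
    qed
  next
    fix c :: real and v assume "v \<in> coord_space m"
    show "N (\<lambda>i. c * v i) = \<bar>c\<bar> * N v" by (rule Nsc)
  next
    fix u v assume "u \<in> coord_space m" "v \<in> coord_space m"
    show "N (\<lambda>i. u i + v i) \<le> N u + N v"
    proof (rule le)
      show "0 \<le> N u + N v" using ge0[of u] ge0[of v] by linarith
      fix i assume i: "i < m"
      have "\<bar>u i + v i\<bar> \<le> \<bar>u i\<bar> + \<bar>v i\<bar>" by (rule abs_triangle_ineq)
      also have "\<dots> \<le> N u + N v" using ge[of i u, OF i] ge[of i v, OF i] by linarith
      finally show "\<bar>u i + v i\<bar> \<le> N u + N v" .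
    qed
  qed
  have fX: "f ` X \<subseteq> coord_space m" by (auto simp: f_def coord_space_def)
  have gX: "i < m \<Longrightarrow> g i \<in> X" for i using g by (auto simp: m_def bij_betw_def)
  have iso: "N (\<lambda>i. f x i - f y i) = D x y" if xy: "x \<in> X" "y \<in> X" for x y
  proof (rule antisym)
    show "N (\<lambda>i. f x i - f y i) \<le> D x y"
    proof (rule le)
      fix i assume i: "i < m"
      have t1: "D x (g i) \<le> D x y + D y (g i)" using triangle xy gX[OF i] by blast
      have t2: "D y (g i) \<le> D y x + D x (g i)" using triangle xy gX[OF i] by blast
      show "\<bar>f x i - f y i\<bar> \<le> D x y" using t1 t2 i commute[of y x] by (simp add: f_def abs_le_iff)
    qed simp
    have "y \<in> g ` {0..<m}" using g xy(2) by (simp add: bij_betw_def m_def)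
    then obtain i where i: "i < m" "g i = y" by auto
    have "\<bar>f x i - f y i\<bar> = D x y" using i xy by (simp add: f_def)
    thus "D x y \<le> N (\<lambda>i. f x i - f y i)" using ge[of i "\<lambda>i. f x i - f y i", OF i(1)] by simp
  qed
  show ?thesis unfolding embeds_isometrically_fin_dim_normed_def
    using norm fX iso by blast
qed

theorem corollary2p3:
  fixes X :: "'a set" and d :: "'a \<Rightarrow> 'a \<Rightarrow> real"
  assumes "Metric_space X d"
  shows "(\<exists>\<alpha>::real. 0 < \<alpha> \<and> \<alpha> < 1 \<and>
            embeds_isometrically_fin_dim_normed X (\<lambda>x y. d x y powr \<alpha>))
         \<longleftrightarrow> finite X"
proof
  interpret Metric_space X d by fact
  assume "\<exists>\<alpha>::real. 0 < \<alpha> \<and> \<alpha> < 1 \<and> embeds_isometrically_fin_dim_normed X (\<lambda>x y. d x y powr \<alpha>)"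
  then obtain \<alpha> where a: "0 < \<alpha>" "\<alpha> < 1"
    and e: "embeds_isometrically_fin_dim_normed X (\<lambda>x y. d x y powr \<alpha>)" by blast
  from e obtain n N f where N: "is_norm_on_Rn n N"
    and fX: "f ` X \<subseteq> coord_space n" and iso0: "\<forall>x\<in>X. \<forall>y\<in>X. N (\<lambda>i. f x i - f y i) = d x y powr \<alpha>"
    unfolding embeds_isometrically_fin_dim_normed_def by (elim exE conjE)
  have iso: "N (\<lambda>i. f x i - f y i) = d x y powr \<alpha>" if "x \<in> X" "y \<in> X" for x y
    using iso0 that by blast
  interpret nrm n N by (rule nrm.intro[OF N])
  define \<beta> where "\<beta> = 1 / \<alpha>"
  have b: "\<beta> > 1" using a by (simp add: \<beta>_def)
  have iso': "N (vsub (f x) (f y)) = d x y powr \<alpha>" if "x \<in> X" "y \<in> X" for x y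
    using iso[OF that] by (simp add: vsub_def)
  have bk: "N (vsub (f x) (f y)) powr \<beta> = d x y" if "x \<in> X" "y \<in> X" for x y
    using iso'[OF that] a by (simp add: \<beta>_def powr_powr powr_one)
  have P: "N (vsub a c) powr \<beta> \<le> N (vsub a b) powr \<beta> + N (vsub b c) powr \<beta>"
    if "a \<in> f ` X" "b \<in> f ` X" "c \<in> f ` X" for a b c
    using that bk triangle by auto
  show "finite X"
  proof (rule ccontr)
    assume inf: "infinite X"
    have "inj_on f X"
    proof (rule inj_onI)
      fix x y assume xy: "x \<in> X" "y \<in> X" "f x = f y"
      have "vsub (f x) (f y) = (\<lambda>i. 0)" using xy by (simp add: vsub_def)
      hence "d x y powr \<alpha> = 0" using iso'[OF xy(1,2)] N_0 by simp
      thus "x = y" using xy by simp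
    qed
    hence "infinite (f ` X)" using inf finite_imageD by blast
    thus False using no_infinite[OF b P fX] by blast
  qed
next
  assume fin: "finite X"
  have D: "Metric_space X (\<lambda>x y. d x y powr (1/2))"
  proof -
    have "(\<lambda>x y. d x y powr (1/2)) = (\<lambda>x y. sqrt (d x y))"
      using Metric_space.nonneg[OF assms] by (intro ext) (simp add: powr_half_sqrt)
    thus ?thesis using sqrt_metric[OF assms] by simp
  qed
  show "\<exists>\<alpha>::real. 0 < \<alpha> \<and> \<alpha> < 1 \<and> embeds_isometrically_fin_dim_normed X (\<lambda>x y. d x y powr \<alpha>)"
    by (rule exI[of _ "1/2"]) (use finite_embeds[OF D fin] in simp)
qed

end
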